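(* Let $A$ be a bialgebra over a commutative ring $\Bbbk$ with coproduct $\Delta_A$ and counit $\varepsilon$. Identify $\mathrm{Ext}^1_A(\Bbbk,\Bbbk)=HH^1(A,\Bbbk)=\mathrm{Der}(A,\Bbbk)$ and $HH^1(A,A)=\mathrm{Der}(A,A)/\{\text{inner derivations}\}$. Then the inclusion of Lie algebras $\mathrm{Ext}^1_A(\Bbbk,\Bbbk)\hookrightarrow HH^1(A,A)$ (the degree $1$ part of the injective morphism of Gerstenhaber algebras $\mathrm{Ext}^*_A(\Bbbk,\Bbbk)\hookrightarrow HH^*(A,A)$ induced by $lift$) is the composite of Lie algebra morphisms $$\mathrm{Der}(A,\Bbbk)\xrightarrow{i}\mathrm{Der}(A,A)\xrightarrow{q}\mathrm{Der}(A,A)/\{\text{inner derivations}\},$$ where $q$ is the quotient map and $i(f)=(A\otimes f)\circ\Delta_A$.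
   Context: A derivation $f:A\to M$ into an $A$-bimodule satisfies $f(ab)=f(a)b+af(b)$; inner derivations are $a\mapsto am-ma$; $\Bbbk$ is an $A$-bimodule via $\varepsilon$. The injective morphism of Gerstenhaber algebras $\mathrm{Ext}^*_A(\Bbbk,\Bbbk)\hookrightarrow HH^*(A,A)$ is induced by $lift:\mathrm{Hom}(A^{\otimes n},\Bbbk)\to\mathrm{Hom}(A^{\otimes n},A)$, $lift(f)(a_1\otimes\dots\otimes a_n)=a_1^{(1)}\cdots a_n^{(1)}f(a_1^{(2)}\otimes\dots\otimes a_n^{(2)})$, where $\mathrm{Ext}^*_A(\Bbbk,\Bbbk)$ carries the Gerstenhaber structure from the operad with multiplication $\mathcal{O}^A(n)=\mathrm{Hom}(A^{\otimes n},\Bbbk)$ with $(f\circ_ig)(a_1\otimes\dots\otimes a_{m+n-1})=f(a_1\otimes\dots\otimes a_{i-1}\otimes a_i^{(1)}\cdots a_{i+n-1}^{(1)}g(a_i^{(2)}\otimes\dots\otimes a_{i+n-1}^{(2)})\otimes a_{i+n}\otimes\dots)$, identity $\varepsilon$, multiplication $\varepsilon\circ\mu$, $e=\mathrm{id}_\Bbbk$, and $HH^*(A,A)$ carries the usual Gerstenhaber structure from the endomorphism operad $\mathrm{Hom}(A^{\otimes n},A)$. On degree $1$ the Gerstenhaber bracket of an operad with multiplication is $\{f,g\}=f\circ_1g-g\circ_1f$. *)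

theory Defs
  imports Main
begin

definition k_algebra :: "('k::comm_ring_1 \<Rightarrow> 'a::ring_1 \<Rightarrow> 'a) \<Rightarrow> bool" where
  "k_algebra smul \<longleftrightarrow>
     (\<forall>s a b. smul s (a + b) = smul s a + smul s b) \<and>
     (\<forall>s t a. smul (s + t) a = smul s a + smul t a) \<and>
     (\<forall>s t a. smul (s * t) a = smul s (smul t a)) \<and>
     (\<forall>a. smul 1 a = a) \<and>
     (\<forall>s a b. smul s (a * b) = smul s a * b) \<and>
     (\<forall>s a b. smul s (a * b) = a * smul s b)"

text \<open>A formal sum  x_1 (x) ... (x) x_n + ...  of elementary
tensors is represented by a list of length-n lists; tens_eq is the congruence on such
formal sums generated by multilinearity and k-balancedness, so that the quotient of the
length-n formal sums is exactly the n-fold tensor product A (x)_k ... (x)_k A (n >= 1).\<close>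

inductive tens_eq :: "('k \<Rightarrow> 'a::ring_1 \<Rightarrow> 'a) \<Rightarrow> 'a list list \<Rightarrow> 'a list list \<Rightarrow> bool"
  for smul where
  refl: "tens_eq smul u u"
| sym: "tens_eq smul u v \<Longrightarrow> tens_eq smul v u"
| trans: "tens_eq smul u v \<Longrightarrow> tens_eq smul v w \<Longrightarrow> tens_eq smul u w"
| comm: "tens_eq smul (u @ v) (v @ u)"
| cong: "tens_eq smul u v \<Longrightarrow> tens_eq smul (u @ w) (v @ w)"
| add: "tens_eq smul [xs @ (x + y) # ys] [xs @ x # ys, xs @ y # ys]"
| zero: "tens_eq smul [xs @ 0 # ys] []"
| bal: "tens_eq smul [xs @ smul s x # y # ys] [xs @ x # smul s y # ys]"

definition T2 :: "('a \<times> 'a) list \<Rightarrow> 'a list list" where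
  "T2 u = map (\<lambda>(x, y). [x, y]) u"

text \<open>A k-bialgebra: Delta a is a representative (Sweedler sum  sum a(1) (x) a(2)) of the
coproduct of a in A (x) A; eps is the counit.\<close>

definition bialgebra ::
  "('k::comm_ring_1 \<Rightarrow> 'a::ring_1 \<Rightarrow> 'a) \<Rightarrow> ('a \<Rightarrow> ('a \<times> 'a) list) \<Rightarrow> ('a \<Rightarrow> 'k) \<Rightarrow> bool" where
  "bialgebra smul Delta eps \<longleftrightarrow>
     k_algebra smul \<and>
     \<comment> \<open>Delta is k-linear\<close>
     (\<forall>a b. tens_eq smul (T2 (Delta (a + b))) (T2 (Delta a) @ T2 (Delta b))) \<and>
     (\<forall>s a. tens_eq smul (T2 (Delta (smul s a))) (map (\<lambda>(x, y). [smul s x, y]) (Delta a))) \<and>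
     \<comment> \<open>eps is k-linear\<close>
     (\<forall>a b. eps (a + b) = eps a + eps b) \<and>
     (\<forall>s a. eps (smul s a) = s * eps a) \<and>
     \<comment> \<open>coassociativity\<close>
     (\<forall>a. tens_eq smul
        (concat (map (\<lambda>(x, y). map (\<lambda>(x1, x2). [x1, x2, y]) (Delta x)) (Delta a)))
        (concat (map (\<lambda>(x, y). map (\<lambda>(y1, y2). [x, y1, y2]) (Delta y)) (Delta a)))) \<and>
     \<comment> \<open>counit axioms\<close>
     (\<forall>a. (\<Sum>(x, y)\<leftarrow>Delta a. smul (eps x) y) = a) \<and>
     (\<forall>a. (\<Sum>(x, y)\<leftarrow>Delta a. smul (eps y) x) = a) \<and>
     \<comment> \<open>Delta and eps are algebra maps\<close>
     (\<forall>a b. tens_eq smul (T2 (Delta (a * b)))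
        (concat (map (\<lambda>(x, y). map (\<lambda>(x', y'). [x * x', y * y']) (Delta b)) (Delta a)))) \<and>
     tens_eq smul (T2 (Delta 1)) [[1, 1]] \<and>
     (\<forall>a b. eps (a * b) = eps a * eps b) \<and>
     eps 1 = 1"

definition Der_Ak :: "('k::comm_ring_1 \<Rightarrow> 'a::ring_1 \<Rightarrow> 'a) \<Rightarrow> ('a \<Rightarrow> 'k) \<Rightarrow> ('a \<Rightarrow> 'k) \<Rightarrow> bool" where
  "Der_Ak smul eps f \<longleftrightarrow>
     (\<forall>a b. f (a + b) = f a + f b) \<and> (\<forall>s a. f (smul s a) = s * f a) \<and>
     (\<forall>a b. f (a * b) = f a * eps b + eps a * f b)"

definition Der_AA :: "('k::comm_ring_1 \<Rightarrow> 'a::ring_1 \<Rightarrow> 'a) \<Rightarrow> ('a \<Rightarrow> 'a) \<Rightarrow> bool" where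
  "Der_AA smul D \<longleftrightarrow>
     (\<forall>a b. D (a + b) = D a + D b) \<and> (\<forall>s a. D (smul s a) = smul s (D a)) \<and>
     (\<forall>a b. D (a * b) = D a * b + a * D b)"

definition inner_der :: "('a::ring_1 \<Rightarrow> 'a) \<Rightarrow> bool" where
  "inner_der D \<longleftrightarrow> (\<exists>m. \<forall>a. D a = a * m - m * a)"

text \<open>Equality in HH^1(A,A) = Der(A,A)/inner derivations, i.e. q D = q E.\<close>
definition hh1_eq :: "('a::ring_1 \<Rightarrow> 'a) \<Rightarrow> ('a \<Rightarrow> 'a) \<Rightarrow> bool" where
  "hh1_eq D E \<longleftrightarrow> inner_der (\<lambda>a. D a - E a)"

definition incl :: "('k \<Rightarrow> 'a::ring_1 \<Rightarrow> 'a) \<Rightarrow> ('a \<Rightarrow> ('a \<times> 'a) list) \<Rightarrow> ('a \<Rightarrow> 'k) \<Rightarrow> 'a \<Rightarrow> 'a" where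
  "incl smul Delta f = (\<lambda>a. \<Sum>(x, y)\<leftarrow>Delta a. smul (f y) x)"

definition lift1 :: "('k \<Rightarrow> 'a::ring_1 \<Rightarrow> 'a) \<Rightarrow> ('a \<Rightarrow> ('a \<times> 'a) list) \<Rightarrow> ('a \<Rightarrow> 'k) \<Rightarrow> 'a \<Rightarrow> 'a" where
  "lift1 smul Delta f a = (\<Sum>(x, y)\<leftarrow>Delta a. smul (f y) x)"

definition circ1_k :: "('k \<Rightarrow> 'a::ring_1 \<Rightarrow> 'a) \<Rightarrow> ('a \<Rightarrow> ('a \<times> 'a) list) \<Rightarrow> ('a \<Rightarrow> 'k) \<Rightarrow> ('a \<Rightarrow> 'k) \<Rightarrow> 'a \<Rightarrow> 'k" where
  "circ1_k smul Delta f g a = f (\<Sum>(x, y)\<leftarrow>Delta a. smul (g y) x)"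

definition brk_k :: "('k::comm_ring_1 \<Rightarrow> 'a::ring_1 \<Rightarrow> 'a) \<Rightarrow> ('a \<Rightarrow> ('a \<times> 'a) list) \<Rightarrow> ('a \<Rightarrow> 'k) \<Rightarrow> ('a \<Rightarrow> 'k) \<Rightarrow> 'a \<Rightarrow> 'k" where
  "brk_k smul Delta f g a = circ1_k smul Delta f g a - circ1_k smul Delta g f a"

definition brk_A :: "('a::ring_1 \<Rightarrow> 'a) \<Rightarrow> ('a \<Rightarrow> 'a) \<Rightarrow> 'a \<Rightarrow> 'a" where
  "brk_A D E a = D (E a) - E (D a)"

end

theory Submission
  imports Defs
begin

lemma sum_concat: "sum_list (map phi (concat xss)) = sum_list (map (\<lambda>xs. sum_list (map phi xs)) xss)"
  by (induct xss) auto

lemma tens_eq_sum: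
  fixes phi :: "'a::ring_1 list \<Rightarrow> 'b::ab_group_add"
  assumes "tens_eq smul u v"
  and add: "\<And>xs x y ys. phi (xs @ (x+y) # ys) = phi (xs@x#ys) + phi (xs@y#ys)"
  and zero: "\<And>xs ys. phi (xs @ 0 # ys) = 0"
  and bal: "\<And>xs s x y ys. phi (xs @ smul s x # y # ys) = phi (xs @ x # smul s y # ys)"
  shows "sum_list (map phi u) = sum_list (map phi v)"
  using assms(1) by induction (auto simp: add zero bal add_ac)

definition phi2 :: "('a \<Rightarrow> 'a \<Rightarrow> 'b::zero) \<Rightarrow> 'a list \<Rightarrow> 'b" where
  "phi2 h l = (case l of [x,y] \<Rightarrow> h x y | _ \<Rightarrow> 0)"

definition phi3 :: "('a \<Rightarrow> 'a \<Rightarrow> 'a \<Rightarrow> 'b::zero) \<Rightarrow> 'a list \<Rightarrow> 'b" where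
  "phi3 h l = (case l of [x,y,z] \<Rightarrow> h x y z | _ \<Rightarrow> 0)"

lemma phi2_app: "phi2 h (xs @ z # ys) =
  (if xs = [] \<and> length ys = 1 then h z (hd ys) else if length xs = 1 \<and> ys = [] then h (hd xs) z else 0)"
  unfolding phi2_def
  by (cases xs; cases ys; auto split: list.splits)

lemma phi3_app: "phi3 h (xs @ z # ys) =
  (if xs = [] \<and> length ys = 2 then h z (hd ys) (hd (tl ys))
   else if length xs = 1 \<and> length ys = 1 then h (hd xs) z (hd ys)
   else if length xs = 2 \<and> ys = [] then h (hd xs) (hd (tl xs)) z else 0)"
  unfolding phi3_def
  apply (cases xs; cases ys)
  apply (auto split: list.splits simp: length_Suc_conv)
  apply (drule arg_cong[where f=length], simp)+
  done

lemma tens_eq_sum2: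
  fixes h :: "'a::ring_1 \<Rightarrow> 'a \<Rightarrow> 'b::ab_group_add"
  assumes "tens_eq smul u v"
  and "\<And>x x' y. h (x+x') y = h x y + h x' y"
  and "\<And>x y y'. h x (y+y') = h x y + h x y'"
  and "\<And>y. h 0 y = 0" and "\<And>x. h x 0 = 0"
  and "\<And>s x y. h (smul s x) y = h x (smul s y)"
  shows "sum_list (map (phi2 h) u) = sum_list (map (phi2 h) v)"
  apply (rule tens_eq_sum[OF assms(1)])
  using assms(2-) by (auto simp: phi2_app)

lemma tens_eq_sum3:
  fixes h :: "'a::ring_1 \<Rightarrow> 'a \<Rightarrow> 'a \<Rightarrow> 'b::ab_group_add"
  assumes "tens_eq smul u v"
  and "\<And>x x' y z. h (x+x') y z = h x y z + h x' y z"
  and "\<And>x y y' z. h x (y+y') z = h x y z + h x y' z"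
  and "\<And>x y z z'. h x y (z+z') = h x y z + h x y z'"
  and "\<And>y z. h 0 y z = 0" and "\<And>x z. h x 0 z = 0" and "\<And>x y. h x y 0 = 0"
  and "\<And>s x y z. h (smul s x) y z = h x (smul s y) z"
  and "\<And>s x y z. h x (smul s y) z = h x y (smul s z)"
  shows "sum_list (map (phi3 h) u) = sum_list (map (phi3 h) v)"
  apply (rule tens_eq_sum[OF assms(1)])
  using assms(2-) by (auto simp: phi3_app)

lemma add_hom_0: fixes f :: "'a::group_add \<Rightarrow> 'b::group_add"
  assumes "\<And>a b. f (a+b) = f a + f b" shows "f 0 = 0"
  using assms[of 0 0] by (metis add_left_cancel add.right_neutral)

lemma add_hom_diff: fixes f :: "'a::group_add \<Rightarrow> 'b::group_add"
  assumes "\<And>a b. f (a+b) = f a + f b" shows "f (a - b) = f a - f b"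
  using assms[of "a - b" b] by (simp add: eq_diff_eq)

lemma add_hom_sum: fixes f :: "'a::ab_group_add \<Rightarrow> 'b::ab_group_add"
  assumes "\<And>a b. f (a+b) = f a + f b" shows "f (sum_list (map g L)) = sum_list (map (\<lambda>p. f (g p)) L)"
  by (induct L) (auto simp: assms add_hom_0[OF assms])

context fixes smul :: "'k::comm_ring_1 \<Rightarrow> 'a::ring_1 \<Rightarrow> 'a"
  assumes KA: "k_algebra smul"
begin

lemma sm_addr: "smul s (a + b) = smul s a + smul s b" using KA unfolding k_algebra_def by blast
lemma sm_addl: "smul (s + t) a = smul s a + smul t a" using KA unfolding k_algebra_def by blast
lemma sm_assoc: "smul (s * t) a = smul s (smul t a)" using KA unfolding k_algebra_def by blast
lemma sm_one: "smul 1 a = a" using KA unfolding k_algebra_def by blast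
lemma sm_ml: "smul s (a * b) = smul s a * b" using KA unfolding k_algebra_def by blast
lemma sm_mr: "smul s (a * b) = a * smul s b" using KA unfolding k_algebra_def by blast
lemma sm_0r: "smul s 0 = 0" by (rule add_hom_0[of "smul s"], rule sm_addr)
lemma sm_0l: "smul 0 a = 0" by (rule add_hom_0[of "\<lambda>s. smul s a"], rule sm_addl)
lemma sm_diffl: "smul (s - t) a = smul s a - smul t a" by (rule add_hom_diff[of "\<lambda>s. smul s a"], rule sm_addl)
lemma sm_sumr: "smul s (sum_list (map g L)) = sum_list (map (\<lambda>p. smul s (g p)) L)"
  by (rule add_hom_sum[of "smul s"], rule sm_addr)
lemma sm_suml: "smul (sum_list (map g L)) a = sum_list (map (\<lambda>p. smul (g p) a) L)"
  by (rule add_hom_sum[of "\<lambda>s. smul s a"], rule sm_addl)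
lemma sm_mult: "smul s x * smul t y = smul (s*t) (x*y)"
  by (metis sm_assoc sm_ml sm_mr mult.commute)
end
lemma double_sum: fixes F G :: "_ \<Rightarrow> 'r::ring"
  shows "(\<Sum>p\<leftarrow>L1. \<Sum>q\<leftarrow>L2. F p * G q) = (\<Sum>p\<leftarrow>L1. F p) * (\<Sum>q\<leftarrow>L2. G q)"
  by (induct L1) (auto simp: distrib_right sum_list_const_mult)

lemma sum_T2: "sum_list (map (phi2 h) (T2 L)) = (\<Sum>(x,y)\<leftarrow>L. h x y)"
  by (induct L) (auto simp: T2_def phi2_def)

lemma Der_Ak_facts:
  assumes "Der_Ak smul eps f"
  shows "f (a+b) = f a + f b" "f (smul s a) = s * f a" "f (a*b) = f a * eps b + eps a * f b"
  using assms unfolding Der_Ak_def by blast+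

lemma Der_AA_facts:
  assumes "Der_AA smul D"
  shows "D (a+b) = D a + D b" "D (smul s a) = smul s (D a)" "D (a*b) = D a * b + a * D b"
  using assms unfolding Der_AA_def by blast+

lemma incl_tens:
  assumes KA: "k_algebra smul" and fa: "\<And>a b. f (a+b) = f a + f b" and fs: "\<And>s a. f (smul s a) = s * f a"
  and "tens_eq smul u v"
  shows "sum_list (map (phi2 (\<lambda>x y. smul (f y) x)) u) = sum_list (map (phi2 (\<lambda>x y. smul (f y) x)) v)"
  apply (rule tens_eq_sum2[OF assms(4)])
  using KA apply (simp_all add: sm_addr sm_addl fa fs sm_0r sm_0l add_hom_0[OF fa])
  by (simp add: sm_assoc[OF KA, symmetric] mult.commute)

lemma incl_as: "incl smul Delta f c = sum_list (map (phi2 (\<lambda>x y. smul (f y) x)) (T2 (Delta c)))"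
  by (simp add: incl_def sum_T2)

lemma bialg_facts:
  assumes "bialgebra smul Delta eps"
  shows "k_algebra smul"
   "tens_eq smul (T2 (Delta (a + b))) (T2 (Delta a) @ T2 (Delta b))"
   "tens_eq smul (T2 (Delta (smul s a))) (map (\<lambda>(x, y). [smul s x, y]) (Delta a))"
   "eps (a + b) = eps a + eps b" "eps (smul s a) = s * eps a"
   "tens_eq smul
        (concat (map (\<lambda>(x, y). map (\<lambda>(x1, x2). [x1, x2, y]) (Delta x)) (Delta a)))
        (concat (map (\<lambda>(x, y). map (\<lambda>(y1, y2). [x, y1, y2]) (Delta y)) (Delta a)))"
   "(\<Sum>(x, y)\<leftarrow>Delta a. smul (eps x) y) = a"
   "(\<Sum>(x, y)\<leftarrow>Delta a. smul (eps y) x) = a"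
   "tens_eq smul (T2 (Delta (a * b)))
        (concat (map (\<lambda>(x, y). map (\<lambda>(x', y'). [x * x', y * y']) (Delta b)) (Delta a)))"
   "eps (a * b) = eps a * eps b"
  using assms unfolding bialgebra_def by blast+

lemma part1:
  assumes B: "bialgebra smul Delta eps" and F: "Der_Ak smul eps f"
  shows "Der_AA smul (incl smul Delta f)"
proof -
  note KA = bialg_facts(1)[OF B]
  note fa = Der_Ak_facts(1)[OF F] and fs = Der_Ak_facts(2)[OF F] and fm = Der_Ak_facts(3)[OF F]
  note IT = incl_tens[OF KA fa fs]
  have A: "incl smul Delta f (a+b) = incl smul Delta f a + incl smul Delta f b" for a b
    unfolding incl_as IT[OF bialg_facts(2)[OF B]] by simp
  have S: "incl smul Delta f (smul s a) = smul s (incl smul Delta f a)" for s a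
    unfolding incl_as IT[OF bialg_facts(3)[OF B]]
    by (simp add: T2_def sum_T2 sm_sumr[OF KA] phi2_def case_prod_unfold o_def sm_assoc[OF KA, symmetric] fs mult.commute)
  have M: "incl smul Delta f (a*b) = incl smul Delta f a * b + a * incl smul Delta f b" for a b
  proof -
    have "incl smul Delta f (a*b) = (\<Sum>p\<leftarrow>Delta a. \<Sum>q\<leftarrow>Delta b. smul (f (snd p * snd q)) (fst p * fst q))"
      unfolding incl_as IT[OF bialg_facts(9)[OF B]]
      by (simp add: sum_concat phi2_def case_prod_unfold o_def)
    also have "\<dots> = (\<Sum>p\<leftarrow>Delta a. \<Sum>q\<leftarrow>Delta b. smul (f (snd p)) (fst p) * smul (eps (snd q)) (fst q)
                     + smul (eps (snd p)) (fst p) * smul (f (snd q)) (fst q))"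
      by (simp add: fm sm_mult[OF KA] sm_addl[OF KA])
    also have "\<dots> = (\<Sum>p\<leftarrow>Delta a. smul (f (snd p)) (fst p)) * (\<Sum>q\<leftarrow>Delta b. smul (eps (snd q)) (fst q))
         + (\<Sum>p\<leftarrow>Delta a. smul (eps (snd p)) (fst p)) * (\<Sum>q\<leftarrow>Delta b. smul (f (snd q)) (fst q))"
      by (simp add: sum_list_addf double_sum)
    also have "\<dots> = incl smul Delta f a * b + a * incl smul Delta f b"
      using bialg_facts(8)[OF B, of a] bialg_facts(8)[OF B, of b]
      by (simp add: incl_def case_prod_unfold)
    finally show ?thesis .
  qed
  show ?thesis unfolding Der_AA_def using A S M by blast
qed


lemma eps_incl:
  assumes B: "bialgebra smul Delta eps" and F: "Der_Ak smul eps f"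
  shows "eps (incl smul Delta f a) = f a"
proof -
  note KA = bialg_facts(1)[OF B]
  have ea: "\<And>a b. eps (a+b) = eps a + eps b" using bialg_facts(4)[OF B] .
  have "eps (incl smul Delta f a) = (\<Sum>p\<leftarrow>Delta a. f (snd p) * eps (fst p))"
    unfolding incl_def case_prod_unfold add_hom_sum[of eps, OF ea] by (simp add: bialg_facts(5)[OF B])
  also have "\<dots> = f (\<Sum>p\<leftarrow>Delta a. smul (eps (fst p)) (snd p))"
    by (simp add: add_hom_sum[of f, OF Der_Ak_facts(1)[OF F]] Der_Ak_facts(2)[OF F] mult.commute)
  also have "\<dots> = f a" using bialg_facts(7)[OF B, of a] by (simp add: case_prod_unfold)
  finally show ?thesis .
qed

lemma part7:
  assumes B: "bialgebra smul Delta eps" and F: "Der_Ak smul eps f" and G: "Der_Ak smul eps g"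
  and H: "hh1_eq (incl smul Delta f) (incl smul Delta g)"
  shows "f = g"
proof
  fix a
  have ea: "\<And>a b. eps (a+b) = eps a + eps b" using bialg_facts(4)[OF B] .
  obtain m where m: "\<And>a. incl smul Delta f a - incl smul Delta g a = a * m - m * a"
    using H unfolding hh1_eq_def inner_der_def by blast
  have "eps (incl smul Delta f a - incl smul Delta g a) = eps (a * m - m * a)" by (simp add: m)
  then show "f a = g a"
    by (simp add: add_hom_diff[of eps, OF ea] eps_incl[OF B F] eps_incl[OF B G] bialg_facts(10)[OF B] mult.commute)
qed

lemma part6: "hh1_eq (lift1 smul Delta f) (incl smul Delta f)"
  unfolding hh1_eq_def inner_der_def lift1_def incl_def by (rule exI[of _ 0]) simp

lemma part2:
  assumes KA: "k_algebra smul"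
  shows "incl smul Delta (\<lambda>a. f a + g a) = (\<lambda>a. incl smul Delta f a + incl smul Delta g a)"
    "incl smul Delta (\<lambda>a. s * f a) = (\<lambda>a. smul s (incl smul Delta f a))"
    "incl smul Delta (\<lambda>a. f a - g a) = (\<lambda>a. incl smul Delta f a - incl smul Delta g a)"
  by (auto simp: incl_def case_prod_unfold sm_addl[OF KA] sm_diffl[OF KA] sum_list_addf
     sum_list_subtractf sm_sumr[OF KA] sm_assoc[OF KA])

lemma part5:
  fixes D E D' E' :: "'a::ring_1 \<Rightarrow> 'a"
  assumes D': "Der_AA smul D'" and E': "Der_AA smul E'"
  and HD: "hh1_eq D D'" and HE: "hh1_eq E E'"
  shows "hh1_eq (brk_A D E) (brk_A D' E')"
proof -
  obtain m where m: "\<And>a. D a - D' a = a * m - m * a"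
    using HD unfolding hh1_eq_def inner_der_def by blast
  obtain n where n: "\<And>a. E a - E' a = a * n - n * a"
    using HE unfolding hh1_eq_def inner_der_def by blast
  have hD: "D x = D' x + x*m - m*x" for x using m[of x] by (simp add: algebra_simps)
  have hE: "E x = E' x + x*n - n*x" for x using n[of x] by (simp add: algebra_simps)
  have aD: "D' (x + y) = D' x + D' y" "D' (x - y) = D' x - D' y" "D' (x*y) = D' x * y + x * D' y" for x y
    using Der_AA_facts[OF D'] add_hom_diff[of D'] by auto
  have aE: "E' (x + y) = E' x + E' y" "E' (x - y) = E' x - E' y" "E' (x*y) = E' x * y + x * E' y" for x y
    using Der_AA_facts[OF E'] add_hom_diff[of E'] by auto
  show ?thesis unfolding hh1_eq_def inner_der_def brk_A_def
  proof (rule exI[of _ "D' n - E' m + n*m - m*n"], rule allI)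
    fix a
    show "D (E a) - E (D a) - (D' (E' a) - E' (D' a)) = a * (D' n - E' m + n*m - m*n) - (D' n - E' m + n*m - m*n) * a"
      unfolding hD hE aD aE by (simp add: algebra_simps)
  qed
qed

lemma part4:
  assumes B: "bialgebra smul Delta eps" and F: "Der_Ak smul eps f" and G: "Der_Ak smul eps g"
  shows "incl smul Delta (brk_k smul Delta f g) = brk_A (incl smul Delta f) (incl smul Delta g)"
proof -
  note KA = bialg_facts(1)[OF B]
  have key: "incl smul Delta f (incl smul Delta g a) = incl smul Delta (circ1_k smul Delta f g) a"
    if F: "Der_Ak smul eps f" and G: "Der_Ak smul eps g" for f g a
  proof -
    note fa = Der_Ak_facts(1)[OF F] and fs = Der_Ak_facts(2)[OF F]
    note ga = Der_Ak_facts(1)[OF G] and gs = Der_Ak_facts(2)[OF G]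
    note IA = Der_AA_facts[OF part1[OF B F]]
    define h where "h = (\<lambda>p q r. smul (f q * g r) p)"
    have T: "sum_list (map (phi3 h) u) = sum_list (map (phi3 h) v)" if "tens_eq smul u v" for u v
      apply (rule tens_eq_sum3[OF that])
      unfolding h_def
      by (simp_all add: sm_addr[OF KA] sm_addl[OF KA] fa ga distrib_left distrib_right sm_0r[OF KA]
          sm_0l[OF KA] add_hom_0[OF fa] add_hom_0[OF ga] fs gs sm_assoc[OF KA, symmetric] ac_simps)
    have "incl smul Delta f (incl smul Delta g a)
        = (\<Sum>p\<leftarrow>Delta a. smul (g (snd p)) (incl smul Delta f (fst p)))"
      unfolding incl_def[of smul Delta g] case_prod_unfold add_hom_sum[of "incl smul Delta f", OF IA(1)]
      by (simp add: IA(2))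
    also have "\<dots> = sum_list (map (phi3 h)
        (concat (map (\<lambda>(x, y). map (\<lambda>(x1, x2). [x1, x2, y]) (Delta x)) (Delta a))))"
      by (simp add: sum_concat phi3_def h_def case_prod_unfold o_def incl_def sm_sumr[OF KA]
          sm_assoc[OF KA, symmetric] mult.commute)
    also have "\<dots> = sum_list (map (phi3 h)
        (concat (map (\<lambda>(x, y). map (\<lambda>(y1, y2). [x, y1, y2]) (Delta y)) (Delta a))))"
      by (rule T[OF bialg_facts(6)[OF B]])
    also have "\<dots> = incl smul Delta (circ1_k smul Delta f g) a"
      by (simp add: sum_concat phi3_def h_def case_prod_unfold o_def incl_def circ1_k_def
          add_hom_sum[of f, OF fa] fs sm_suml[OF KA] mult.commute)
    finally show ?thesis .
  qed
  have E: "brk_k smul Delta f g = (\<lambda>a. circ1_k smul Delta f g a - circ1_k smul Delta g f a)"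
    by (simp add: brk_k_def fun_eq_iff)
  show ?thesis
    unfolding E part2(3)[OF KA] brk_A_def by (simp add: key[OF F G] key[OF G F])
qed

theorem mainTheorem4:
  fixes smul :: "'k::comm_ring_1 \<Rightarrow> 'a::ring_1 \<Rightarrow> 'a"
    and Delta :: "'a \<Rightarrow> ('a \<times> 'a) list"
    and eps :: "'a \<Rightarrow> 'k"
  assumes "bialgebra smul Delta eps"
  shows
    "(\<forall>f. Der_Ak smul eps f \<longrightarrow> Der_AA smul (incl smul Delta f))
     \<and> (\<forall>f g. Der_Ak smul eps f \<and> Der_Ak smul eps g \<longrightarrow>
          incl smul Delta (\<lambda>a. f a + g a) = (\<lambda>a. incl smul Delta f a + incl smul Delta g a))
     \<and> (\<forall>f s. Der_Ak smul eps f \<longrightarrow>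
          incl smul Delta (\<lambda>a. s * f a) = (\<lambda>a. smul s (incl smul Delta f a)))
     \<and> (\<forall>f g. Der_Ak smul eps f \<and> Der_Ak smul eps g \<longrightarrow>
          incl smul Delta (brk_k smul Delta f g) = brk_A (incl smul Delta f) (incl smul Delta g))
     \<and> (\<forall>D E D' E'. Der_AA smul D \<and> Der_AA smul E \<and> Der_AA smul D' \<and> Der_AA smul E' \<and>
          hh1_eq D D' \<and> hh1_eq E E' \<longrightarrow> hh1_eq (brk_A D E) (brk_A D' E'))
     \<and> (\<forall>f. Der_Ak smul eps f \<longrightarrow> hh1_eq (lift1 smul Delta f) (incl smul Delta f))
     \<and> (\<forall>f g. Der_Ak smul eps f \<and> Der_Ak smul eps g \<and>
          hh1_eq (incl smul Delta f) (incl smul Delta g) \<longrightarrow> f = g)"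
  apply (intro conjI allI impI)
  subgoal using part1[OF assms] by blast
  subgoal using part2(1)[OF bialg_facts(1)[OF assms]] by blast
  subgoal using part2(2)[OF bialg_facts(1)[OF assms]] by blast
  subgoal using part4[OF assms] by blast
  subgoal using part5 by blast
  subgoal using part6 by blast
  subgoal using part7[OF assms] by blast
  done

end
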